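(* Let $f\colon\mathbb{R}^n\to\mathbb{R}$ be $f(x)=x^\top Ax+b^\top x+c$ with $A\in\mathbb{R}^{n\times n}$ symmetric, $b\in\mathbb{R}^n$, $c\in\mathbb{R}$. Then the approximately Gaussian replicator flow (AGRF) under $f$ is given by $$\dot m(t)=-2C(t)Am(t)-C(t)b,\qquad \dot C(t)=-2C(t)AC(t);$$ that is, for every $m\in\mathbb{R}^n$ and every symmetric positive semidefinite $C\in\mathbb{R}^{n\times n}$, the right-hand sides of the AGRF system evaluated at $(m,C)$ equal $-2CAm-Cb$ and $-2CAC$ respectively.
   Context: An approximately Gaussian replicator flow (AGRF) under $f$ is a solution $(m,C)\colon[0,\infty)\to\mathbb{R}^n\times\mathbb{R}^{n\times n}$ of the ODE system, for all $i,j\in\{1,\dots,n\}$, writing $\mathbb{E}$ for expectation over $x\sim\mathcal{N}(m(t),C(t))$ (Gaussian with mean $m(t)$, covariance $C(t)$): $$\dot m_i=m_i\,\mathbb{E}[f(x)]-\mathbb{E}[x_if(x)],$$ $$\dot C_{ij}=(C_{ij}-m_im_j)\mathbb{E}[f(x)]-\mathbb{E}[x_ix_jf(x)]+m_i\mathbb{E}[x_jf(x)]+m_j\mathbb{E}[x_if(x)].$$ *)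

theory Defs
  imports "HOL-Analysis.Analysis" "HOL-Probability.Probability"
begin

definition std_gaussian :: "(real^'n) measure" where
  "std_gaussian = density lborel (\<lambda>z. ennreal (\<Prod>i\<in>UNIV. std_normal_density (z $ i)))"

text \<open>Gaussian N(m,C): law of m + S z with z standard Gaussian and S S^T = C
  (for symmetric positive semidefinite C such S exists; the law does not depend on the choice).\<close>
definition gaussian :: "real^'n \<Rightarrow> real^'n^'n \<Rightarrow> (real^'n) measure" where
  "gaussian m C = distr std_gaussian borel
     (\<lambda>z. m + (SOME S :: real^'n^'n. S ** transpose S = C) *v z)"

definition gexp :: "real^'n \<Rightarrow> real^'n^'n \<Rightarrow> (real^'n \<Rightarrow> real) \<Rightarrow> real" where
  "gexp m C g = integral\<^sup>L (gaussian m C) g"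

definition agrf_m_rhs :: "(real^'n \<Rightarrow> real) \<Rightarrow> real^'n \<Rightarrow> real^'n^'n \<Rightarrow> real^'n" where
  "agrf_m_rhs f m C = (\<chi> i. m $ i * gexp m C f - gexp m C (\<lambda>x. x $ i * f x))"

definition agrf_C_rhs :: "(real^'n \<Rightarrow> real) \<Rightarrow> real^'n \<Rightarrow> real^'n^'n \<Rightarrow> real^'n^'n" where
  "agrf_C_rhs f m C = (\<chi> i j. (C $ i $ j - m $ i * m $ j) * gexp m C f
      - gexp m C (\<lambda>x. x $ i * x $ j * f x)
      + m $ i * gexp m C (\<lambda>x. x $ j * f x) + m $ j * gexp m C (\<lambda>x. x $ i * f x))"

definition psd :: "real^'n^'n \<Rightarrow> bool" where
  "psd C \<longleftrightarrow> transpose C = C \<and> (\<forall>v. 0 \<le> v \<bullet> (C *v v))"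

end

theory Submission
  imports Defs
begin


lemma Basis_vec_axis: "(Basis :: (real^'n) set) = range (\<lambda>i. axis i 1)"
  by (auto simp: Basis_vec_def)

lemma phi_nth: "(\<Sum>b\<in>(Basis::(real^'n) set). f b *\<^sub>R b) $ i = f (axis i 1)"
proof -
  have "(\<Sum>b\<in>(Basis::(real^'n) set). f b *\<^sub>R b) $ i = (\<Sum>b\<in>Basis. f b * (b $ i))"
    by (simp add: sum_component)
  also have "\<dots> = (\<Sum>j\<in>UNIV. f (axis j 1) * (axis j (1::real) $ i))"
    unfolding Basis_vec_axis by (subst sum.reindex) (auto simp: inj_on_def axis_eq_axis)
  also have "\<dots> = (\<Sum>j\<in>UNIV. if j = i then f (axis i 1) else 0)"
    by (rule sum.cong) (auto simp: axis_def)
  also have "\<dots> = f (axis i 1)"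
    by simp
  finally show ?thesis .
qed

lemma gauss_prod:
  fixes g :: "'n::finite \<Rightarrow> real \<Rightarrow> real"
  assumes meas[measurable]: "\<And>i. g i \<in> borel_measurable borel"
    and int: "\<And>i. integrable lborel (\<lambda>t. std_normal_density t * g i t)"
  shows "integrable std_gaussian (\<lambda>z::real^'n. \<Prod>i\<in>UNIV. g i (z $ i))"
    "integral\<^sup>L std_gaussian (\<lambda>z::real^'n. \<Prod>i\<in>UNIV. g i (z $ i))
       = (\<Prod>i\<in>UNIV. integral\<^sup>L lborel (\<lambda>t. std_normal_density t * g i t))"
proof -
  interpret P: product_sigma_finite "\<lambda>_::real^'n. (lborel :: real measure)"
    by (simp add: product_sigma_finite_def lborel.sigma_finite_measure_axioms)
  define ix :: "real^'n \<Rightarrow> 'n" where "ix b = (THE i. b = axis i 1)" for b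
  have ix: "ix (axis i 1) = i" for i
    unfolding ix_def by (rule the_equality) (auto simp: axis_eq_axis)
  define G where "G b t = std_normal_density t * g (ix b) t" for b t
  define \<phi> where "\<phi> f = (\<Sum>b\<in>(Basis::(real^'n) set). f b *\<^sub>R b)" for f :: "real^'n \<Rightarrow> real"
  have phi: "\<phi> f $ i = f (axis i 1)" for f i unfolding \<phi>_def by (rule phi_nth)
  have eqfun: "(\<Prod>i\<in>UNIV. std_normal_density (\<phi> f $ i)) * (\<Prod>i\<in>UNIV. g i (\<phi> f $ i))
        = (\<Prod>b\<in>Basis. G b (f b))" for f
  proof -
    have "(\<Prod>b\<in>Basis. G b (f b)) = (\<Prod>i\<in>UNIV. G (axis i 1) (f (axis i 1)))"
      unfolding Basis_vec_axis by (subst prod.reindex) (auto simp: inj_on_def axis_eq_axis)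
    then show ?thesis by (simp add: G_def phi ix prod.distrib)
  qed
  have [measurable]: "\<phi> \<in> borel_measurable (\<Pi>\<^sub>M b\<in>Basis. lborel)"
    unfolding \<phi>_def by measurable
  have intP: "integrable (\<Pi>\<^sub>M b\<in>Basis. lborel) (\<lambda>f. \<Prod>b\<in>Basis. G b (f b))"
    by (rule P.product_integrable_prod) (auto simp: G_def int)
  have intP': "integrable (\<Pi>\<^sub>M b\<in>Basis. lborel) (\<lambda>f. (\<Prod>i\<in>UNIV. std_normal_density (\<phi> f $ i)) * (\<Prod>i\<in>UNIV. g i (\<phi> f $ i)))"
    using intP by (simp add: eqfun)
  have dens: "std_gaussian = density lborel (\<lambda>z::real^'n. ennreal (\<Prod>i\<in>UNIV. std_normal_density (z $ i)))"
    by (simp add: std_gaussian_def)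
  have m1[measurable]: "(\<lambda>z::real^'n. \<Prod>i\<in>UNIV. std_normal_density (z $ i)) \<in> borel_measurable borel"
    by measurable
  have m2[measurable]: "(\<lambda>z::real^'n. \<Prod>i\<in>UNIV. g i (z $ i)) \<in> borel_measurable borel"
    by measurable
  have m1'[measurable]: "(\<lambda>z::real^'n. \<Prod>i\<in>UNIV. std_normal_density (z $ i)) \<in> borel_measurable lborel"
    by measurable
  have m2'[measurable]: "(\<lambda>z::real^'n. \<Prod>i\<in>UNIV. g i (z $ i)) \<in> borel_measurable lborel"
    by measurable
  have nn: "AE z in lborel. 0 \<le> (\<Prod>i\<in>UNIV. std_normal_density ((z::real^'n) $ i))"
    by (auto intro!: prod_nonneg simp: normal_density_nonneg)
  show "integrable std_gaussian (\<lambda>z::real^'n. \<Prod>i\<in>UNIV. g i (z $ i))"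
    unfolding dens
    apply (subst integrable_real_density[OF m1' nn m2'])
    apply (subst lborel_eq)
    apply (subst integrable_distr_eq)
    using intP' by (auto simp: \<phi>_def)
  show "integral\<^sup>L std_gaussian (\<lambda>z::real^'n. \<Prod>i\<in>UNIV. g i (z $ i))
       = (\<Prod>i\<in>UNIV. integral\<^sup>L lborel (\<lambda>t. std_normal_density t * g i t))"
    unfolding dens
    apply (subst integral_real_density[OF m1' nn m2'])
    apply (subst lborel_eq)
    apply (subst integral_distr)
      apply simp apply simp
    apply (fold \<phi>_def)
    apply (simp only: eqfun)
    apply (subst P.product_integral_prod)
      apply (simp add: G_def int) apply (simp add: G_def[abs_def] int)
    unfolding Basis_vec_axis
    apply (subst prod.reindex) apply (auto simp: inj_on_def axis_eq_axis G_def[abs_def] ix)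
    done
qed

definition mom :: "nat \<Rightarrow> real" where
  "mom k = integral\<^sup>L lborel (\<lambda>t. std_normal_density t * t ^ k)"

lemma mom_vals: "mom 0 = 1" "mom 1 = 0" "mom 2 = 1" "mom 3 = 0" "mom 4 = 3"
  using integral_std_normal_moment_even[of 0] integral_std_normal_moment_odd[of 0]
    integral_std_normal_moment_even[of 1] integral_std_normal_moment_odd[of 1]
    integral_std_normal_moment_even[of 2]
  by (simp_all add: mom_def fact_numeral)

lemma mom_vals': "mom (Suc 0) = 0" "mom (Suc (Suc 0)) = 1" "mom (Suc (Suc (Suc 0))) = 0" "mom (Suc (Suc (Suc (Suc 0)))) = 3"
  using mom_vals by (simp_all add: numeral_eq_Suc)

lemma gauss_mono:
  fixes n :: "'n::finite \<Rightarrow> nat"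
  shows "integrable std_gaussian (\<lambda>z::real^'n. \<Prod>i\<in>UNIV. (z $ i) ^ n i)"
    "integral\<^sup>L std_gaussian (\<lambda>z::real^'n. \<Prod>i\<in>UNIV. (z $ i) ^ n i) = (\<Prod>i\<in>UNIV. mom (n i))"
  using gauss_prod[of "\<lambda>i t. t ^ n i"] by (auto simp: mom_def integrable_std_normal_moment)

lemma prod_delta_pow: "(\<Prod>b\<in>UNIV. (x $ b) ^ (if b = i then 1 else 0)) = (x::real^'n::finite) $ i"
proof -
  have "(\<Prod>b\<in>UNIV. (x $ b) ^ (if b = i then 1 else 0)) = (\<Prod>b\<in>UNIV. if b = i then x $ b else 1)"
    by (rule prod.cong) auto
  then show ?thesis by simp
qed

lemma mono4: "(x::real^'n::finite) $ i * x $ j * x $ k * x $ l =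
   (\<Prod>b\<in>UNIV. (x $ b) ^ ((if b = i then 1 else 0) + (if b = j then 1 else 0) + (if b = k then 1 else 0) + (if b = l then 1 else 0)))"
  by (simp only: power_add prod.distrib prod_delta_pow)

lemma mono3: "(x::real^'n::finite) $ i * x $ j * x $ k =
   (\<Prod>b\<in>UNIV. (x $ b) ^ ((if b = i then 1 else 0) + (if b = j then 1 else 0) + (if b = k then 1 else 0)))"
  by (simp only: power_add prod.distrib prod_delta_pow)

lemma mono2: "(x::real^'n::finite) $ i * x $ j =
   (\<Prod>b\<in>UNIV. (x $ b) ^ ((if b = i then 1 else 0) + (if b = j then 1 else 0)))"
  by (simp only: power_add prod.distrib prod_delta_pow)

lemma mono1: "(x::real^'n::finite) $ i =
   (\<Prod>b\<in>UNIV. (x $ b) ^ ((if b = i then 1 else 0)))"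
  by (simp only: prod_delta_pow)

lemma prod_restrict:
  fixes cnt :: "'n::finite \<Rightarrow> nat"
  assumes "\<And>b. b \<notin> S \<Longrightarrow> cnt b = 0"
  shows "(\<Prod>b\<in>UNIV. mom (cnt b)) = (\<Prod>b\<in>S. mom (cnt b))"
  by (rule prod.mono_neutral_right) (auto simp: assms mom_vals)

lemma E4:
  "integrable std_gaussian (\<lambda>z::real^'n::finite. z $ i * z $ j * z $ k * z $ l)"
  "integral\<^sup>L std_gaussian (\<lambda>z::real^'n::finite. z $ i * z $ j * z $ k * z $ l) =
    (if i = j then 1 else 0) * (if k = l then 1 else 0) + (if i = k then 1 else 0) * (if j = l then 1 else 0)
   + (if i = l then 1 else 0) * (if j = k then 1 else 0)"
proof -
  show "integrable std_gaussian (\<lambda>z::real^'n::finite. z $ i * z $ j * z $ k * z $ l)"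
    by (subst mono4) (rule gauss_mono)
  have "integral\<^sup>L std_gaussian (\<lambda>z::real^'n::finite. z $ i * z $ j * z $ k * z $ l)
    = (\<Prod>b\<in>{i,j,k,l}. mom ((if b = i then 1 else 0) + (if b = j then 1 else 0) + (if b = k then 1 else 0) + (if b = l then 1 else 0)))"
    by (subst mono4, subst gauss_mono, rule prod_restrict) auto
  then show "integral\<^sup>L std_gaussian (\<lambda>z::real^'n::finite. z $ i * z $ j * z $ k * z $ l) =
    (if i = j then 1 else 0) * (if k = l then 1 else 0) + (if i = k then 1 else 0) * (if j = l then 1 else 0)
   + (if i = l then 1 else 0) * (if j = k then 1 else 0)"
    by (cases "i=j"; cases "i=k"; cases "i=l"; cases "j=k"; cases "j=l"; cases "k=l"; simp add: mom_vals mom_vals' insert_absorb)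
qed

lemma E3:
  "integrable std_gaussian (\<lambda>z::real^'n::finite. z $ i * z $ j * z $ k)"
  "integral\<^sup>L std_gaussian (\<lambda>z::real^'n::finite. z $ i * z $ j * z $ k) = 0"
proof -
  show "integrable std_gaussian (\<lambda>z::real^'n::finite. z $ i * z $ j * z $ k)"
    by (subst mono3) (rule gauss_mono)
  have "integral\<^sup>L std_gaussian (\<lambda>z::real^'n::finite. z $ i * z $ j * z $ k)
    = (\<Prod>b\<in>{i,j,k}. mom ((if b = i then 1 else 0) + (if b = j then 1 else 0) + (if b = k then 1 else 0)))"
    by (subst mono3, subst gauss_mono, rule prod_restrict) auto
  then show "integral\<^sup>L std_gaussian (\<lambda>z::real^'n::finite. z $ i * z $ j * z $ k) = 0"
    by (cases "i=j"; cases "i=k"; cases "j=k"; simp add: mom_vals mom_vals' insert_absorb)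
qed

lemma E2:
  "integrable std_gaussian (\<lambda>z::real^'n::finite. z $ i * z $ j)"
  "integral\<^sup>L std_gaussian (\<lambda>z::real^'n::finite. z $ i * z $ j) = (if i = j then 1 else 0)"
proof -
  show "integrable std_gaussian (\<lambda>z::real^'n::finite. z $ i * z $ j)"
    by (subst mono2) (rule gauss_mono)
  have "integral\<^sup>L std_gaussian (\<lambda>z::real^'n::finite. z $ i * z $ j)
    = (\<Prod>b\<in>{i,j}. mom ((if b = i then 1 else 0) + (if b = j then 1 else 0)))"
    by (subst mono2, subst gauss_mono, rule prod_restrict) auto
  then show "integral\<^sup>L std_gaussian (\<lambda>z::real^'n::finite. z $ i * z $ j) = (if i = j then 1 else 0)"
    by (cases "i=j"; simp add: mom_vals mom_vals' insert_absorb)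
qed

lemma E1:
  "integrable std_gaussian (\<lambda>z::real^'n::finite. z $ i)"
  "integral\<^sup>L std_gaussian (\<lambda>z::real^'n::finite. z $ i) = 0"
proof -
  show "integrable std_gaussian (\<lambda>z::real^'n::finite. z $ i)"
    by (subst mono1) (rule gauss_mono)
  have "integral\<^sup>L std_gaussian (\<lambda>z::real^'n::finite. z $ i)
    = (\<Prod>b\<in>{i}. mom ((if b = i then 1 else 0)))"
    by (subst mono1, subst gauss_mono, rule prod_restrict) auto
  then show "integral\<^sup>L std_gaussian (\<lambda>z::real^'n::finite. z $ i) = 0"
    by (simp add: mom_vals mom_vals' insert_absorb)
qed

lemma E0:
  "integrable std_gaussian (\<lambda>z::real^'n::finite. 1::real)"
  "integral\<^sup>L std_gaussian (\<lambda>z::real^'n::finite. 1::real) = 1"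
proof -
  have "integrable std_gaussian (\<lambda>z::real^'n. \<Prod>i\<in>UNIV. (z$i)^((\<lambda>_. 0::nat) i))"
    using gauss_mono(1)[of "\<lambda>_::'n. 0"] by simp
  moreover have "integral\<^sup>L std_gaussian (\<lambda>z::real^'n. \<Prod>i\<in>UNIV. (z$i)^((\<lambda>_. 0::nat) i)) = 1"
    using gauss_mono(2)[of "\<lambda>_::'n. 0"] by (simp add: mom_vals)
  ultimately
  show "integrable std_gaussian (\<lambda>z::real^'n::finite. 1::real)"
    "integral\<^sup>L std_gaussian (\<lambda>z::real^'n::finite. 1::real) = 1"
    by (simp_all add: mom_vals)
qed



lemma expand4: "(a \<bullet> z) * (b \<bullet> z) * (c \<bullet> z) * (d \<bullet> (z::real^'n::finite)) =
  (\<Sum>l\<in>UNIV. \<Sum>k\<in>UNIV. \<Sum>j\<in>UNIV. \<Sum>i\<in>UNIV. (a$i*b$j*c$k*d$l) * (z$i*z$j*z$k*z$l))"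
  unfolding inner_vec_def inner_real_def
  by (simp only: sum_distrib_left sum_distrib_right) (simp only: mult_ac)

lemma int4: "integral\<^sup>L std_gaussian (\<lambda>z. (a \<bullet> z) * (b \<bullet> z) * (c \<bullet> z) * (d \<bullet> (z::real^'n::finite))) =
  (\<Sum>l\<in>UNIV. \<Sum>k\<in>UNIV. \<Sum>j\<in>UNIV. \<Sum>i\<in>UNIV. (a$i*b$j*c$k*d$l) * 
   ((if i = j then 1 else 0) * (if k = l then 1 else 0) + (if i = k then 1 else 0) * (if j = l then 1 else 0)
   + (if i = l then 1 else 0) * (if j = k then 1 else 0)))"
  unfolding expand4
  by (simp add: E4)

lemma delta_mult: "(x::real) * (if P then 1 else 0) = (if P then x else 0)" by simp

lemma D1: fixes f :: "'n::finite \<Rightarrow> real" shows "(\<Sum>i\<in>UNIV. f i * (if P \<and> i = j then 1 else 0)) = (if P then f j else (0::real))"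
  by (cases P) (simp_all add: delta_mult)
lemma D1': fixes f :: "'n::finite \<Rightarrow> real" shows "(\<Sum>i\<in>UNIV. (if P then f i else 0)) = (if P then (\<Sum>i\<in>UNIV. f i) else (0::real))"
  by simp
lemma D2: fixes f :: "'n::finite \<Rightarrow> real" shows "(\<Sum>i\<in>UNIV. (if i = j then f i else 0)) = (f j::real)"
  by simp
lemma D2': fixes f :: "'n::finite \<Rightarrow> real" shows "(\<Sum>i\<in>UNIV. (if j = i then f i else 0)) = (f j::real)"
  by simp

lemma L4val:
  fixes a b c d :: "real^'n::finite"
  shows "(\<Sum>l\<in>UNIV. \<Sum>k\<in>UNIV. \<Sum>j\<in>UNIV. \<Sum>i\<in>UNIV. (a$i*b$j*c$k*d$l) * 
   ((if i = j then 1 else 0) * (if k = l then 1 else 0) + (if i = k then 1 else 0) * (if j = l then 1 else 0)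
   + (if i = l then 1 else 0) * (if j = k then 1 else 0)))
   = (a \<bullet> b) * (c \<bullet> d) + (a \<bullet> c) * (b \<bullet> d) + (a \<bullet> d) * (b \<bullet> c)"
  unfolding inner_vec_def inner_real_def distrib_left sum.distrib
  apply (simp only: mult.assoc[symmetric] delta_mult)
  apply (simp add: if_if_eq_conj D1 D1' D2 D2')
  apply (intro arg_cong2[where f=plus])
    apply (simp_all add: sum_product mult_ac)
   apply (subst sum.swap, simp)+
  done

lemma L4:
  fixes a b c d :: "real^'n::finite"
  shows "integrable std_gaussian (\<lambda>z. (a \<bullet> z) * (b \<bullet> z) * (c \<bullet> z) * (d \<bullet> z))"
    "integral\<^sup>L std_gaussian (\<lambda>z. (a \<bullet> z) * (b \<bullet> z) * (c \<bullet> z) * (d \<bullet> z))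
       = (a \<bullet> b) * (c \<bullet> d) + (a \<bullet> c) * (b \<bullet> d) + (a \<bullet> d) * (b \<bullet> c)"
  unfolding int4 L4val by (simp_all only: expand4) (simp add: E4)

lemma expand3: "(a \<bullet> z) * (b \<bullet> z) * (c \<bullet> (z::real^'n::finite)) =
  (\<Sum>k\<in>UNIV. \<Sum>j\<in>UNIV. \<Sum>i\<in>UNIV. (a$i*b$j*c$k) * (z$i*z$j*z$k))"
  unfolding inner_vec_def inner_real_def
  by (simp only: sum_distrib_left sum_distrib_right) (simp only: mult_ac)

lemma L3:
  fixes a b c :: "real^'n::finite"
  shows "integrable std_gaussian (\<lambda>z. (a \<bullet> z) * (b \<bullet> z) * (c \<bullet> z))"
    "integral\<^sup>L std_gaussian (\<lambda>z. (a \<bullet> z) * (b \<bullet> z) * (c \<bullet> z)) = 0"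
  unfolding expand3 by (simp_all add: E3)

lemma expand2: "(a \<bullet> z) * (b \<bullet> (z::real^'n::finite)) =
  (\<Sum>j\<in>UNIV. \<Sum>i\<in>UNIV. (a$i*b$j) * (z$i*z$j))"
  unfolding inner_vec_def inner_real_def
  by (simp only: sum_distrib_left sum_distrib_right) (simp only: mult_ac)

lemma L2:
  fixes a b :: "real^'n::finite"
  shows "integrable std_gaussian (\<lambda>z. (a \<bullet> z) * (b \<bullet> z))"
    "integral\<^sup>L std_gaussian (\<lambda>z. (a \<bullet> z) * (b \<bullet> z)) = a \<bullet> b"
  unfolding expand2 by (simp_all add: E2 delta_mult inner_vec_def)

lemma L1:
  fixes a :: "real^'n::finite"
  shows "integrable std_gaussian (\<lambda>z. (a \<bullet> z))"
    "integral\<^sup>L std_gaussian (\<lambda>z. (a \<bullet> z)) = 0"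
  unfolding inner_vec_def inner_real_def by (simp_all add: E1)



lemma lin_eq: "u \<bullet> (S *v z) = (u v* S) \<bullet> (z::real^'n::finite)"
  by (simp add: dot_lmul_matrix)

lemma lin_inner: assumes "S ** transpose S = C"
  shows "(u v* S) \<bullet> (v v* (S::real^'n::finite^'m::finite)) = u \<bullet> (C *v v)"
proof -
  have "(u v* S) \<bullet> (v v* S) = u \<bullet> (S *v (v v* S))" by (simp add: dot_lmul_matrix)
  also have "S *v (v v* S) = S *v (transpose S *v v)" by simp
  also have "\<dots> = C *v v" using assms by (simp only: matrix_vector_mul_assoc)
  finally show ?thesis .
qed

context
  fixes S C :: "real^'n::finite^'n"
  assumes SC: "S ** transpose S = C"
begin

lemma linS: "u \<bullet> (S *v z) = (u v* S) \<bullet> z"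
  by (rule lin_eq)

lemma N1: "integrable std_gaussian (\<lambda>z. u \<bullet> (S *v z))"
  "integral\<^sup>L std_gaussian (\<lambda>z. u \<bullet> (S *v z)) = 0"
  unfolding linS by (rule L1)+

lemma N2: "integrable std_gaussian (\<lambda>z. (u \<bullet> (S *v z)) * (v \<bullet> (S *v z)))"
  "integral\<^sup>L std_gaussian (\<lambda>z. (u \<bullet> (S *v z)) * (v \<bullet> (S *v z))) = u \<bullet> (C *v v)"
  unfolding linS by (rule L2, simp add: L2 lin_inner[OF SC])

lemma N3: "integrable std_gaussian (\<lambda>z. (u \<bullet> (S *v z)) * (v \<bullet> (S *v z)) * (w \<bullet> (S *v z)))"
  "integral\<^sup>L std_gaussian (\<lambda>z. (u \<bullet> (S *v z)) * (v \<bullet> (S *v z)) * (w \<bullet> (S *v z))) = 0"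
  unfolding linS by (rule L3)+

lemma N4: "integrable std_gaussian (\<lambda>z. (u \<bullet> (S *v z)) * (v \<bullet> (S *v z)) * (w \<bullet> (S *v z)) * (t \<bullet> (S *v z)))"
  "integral\<^sup>L std_gaussian (\<lambda>z. (u \<bullet> (S *v z)) * (v \<bullet> (S *v z)) * (w \<bullet> (S *v z)) * (t \<bullet> (S *v z)))
   = (u \<bullet> (C *v v)) * (w \<bullet> (C *v t)) + (u \<bullet> (C *v w)) * (v \<bullet> (C *v t)) + (u \<bullet> (C *v t)) * (v \<bullet> (C *v w))"
  unfolding linS by (rule L4, simp add: L4 lin_inner[OF SC])

lemma Q0: "integrable std_gaussian (\<lambda>z. \<Sum>k\<in>UNIV. (axis k 1 \<bullet> (S *v z)) * (A $ k \<bullet> (S *v z)))"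
  "integral\<^sup>L std_gaussian (\<lambda>z. \<Sum>k\<in>UNIV. (axis k 1 \<bullet> (S *v z)) * (A $ k \<bullet> (S *v z)))
    = (\<Sum>k\<in>UNIV. axis k 1 \<bullet> (C *v A $ k))"
  by (simp_all add: N2)

lemma Q1: "integrable std_gaussian (\<lambda>z. (u \<bullet> (S *v z)) * (\<Sum>k\<in>UNIV. (axis k 1 \<bullet> (S *v z)) * (A $ k \<bullet> (S *v z))))"
  "integral\<^sup>L std_gaussian (\<lambda>z. (u \<bullet> (S *v z)) * (\<Sum>k\<in>UNIV. (axis k 1 \<bullet> (S *v z)) * (A $ k \<bullet> (S *v z)))) = 0"
  by (simp_all add: sum_distrib_left mult.assoc[symmetric] N3)

lemma Q2: "integrable std_gaussian (\<lambda>z. (u \<bullet> (S *v z)) * (v \<bullet> (S *v z)) * (\<Sum>k\<in>UNIV. (axis k 1 \<bullet> (S *v z)) * (A $ k \<bullet> (S *v z))))"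
  "integral\<^sup>L std_gaussian (\<lambda>z. (u \<bullet> (S *v z)) * (v \<bullet> (S *v z)) * (\<Sum>k\<in>UNIV. (axis k 1 \<bullet> (S *v z)) * (A $ k \<bullet> (S *v z))))
   = (u \<bullet> (C *v v)) * (\<Sum>k\<in>UNIV. axis k 1 \<bullet> (C *v A $ k))
     + (\<Sum>k\<in>UNIV. (u \<bullet> (C *v axis k 1)) * (v \<bullet> (C *v A $ k)))
     + (\<Sum>k\<in>UNIV. (u \<bullet> (C *v A $ k)) * (v \<bullet> (C *v axis k 1)))"
  by (simp_all add: sum_distrib_left mult.assoc[symmetric] N4 sum.distrib)

end

lemma R_id:
  fixes C A :: "real^'n::finite^'n"
  assumes symC: "transpose C = C" 
  shows "(\<Sum>k\<in>UNIV. (u \<bullet> (C *v axis k 1)) * (v \<bullet> (C *v A $ k))) = u \<bullet> ((C ** A ** C) *v v)"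
proof -
  have "(\<Sum>k\<in>UNIV. (u \<bullet> (C *v axis k 1)) * (v \<bullet> (C *v A $ k)))
      = (\<Sum>k\<in>UNIV. (u v* C) $ k * (A *v (v v* C)) $ k)"
  proof (rule sum.cong[OF refl])
    fix k
    have "u \<bullet> (C *v axis k 1) = (u v* C) $ k"
      by (simp add: dot_lmul_matrix[symmetric] inner_axis)
    moreover have "v \<bullet> (C *v A $ k) = (A *v (v v* C)) $ k"
    proof -
      have "v \<bullet> (C *v A $ k) = (v v* C) \<bullet> A $ k" by (simp only: dot_lmul_matrix)
      also have "\<dots> = A $ k \<bullet> (v v* C)" by (rule inner_commute)
      also have "\<dots> = (A *v (v v* C)) $ k"
        by (simp only: matrix_vector_mult_def inner_vec_def inner_real_def vec_lambda_beta)
      finally show ?thesis .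
    qed
    ultimately show "(u \<bullet> (C *v axis k 1)) * (v \<bullet> (C *v A $ k)) = (u v* C) $ k * (A *v (v v* C)) $ k"
      by simp
  qed
  also have "\<dots> = (u v* C) \<bullet> (A *v (v v* C))"
    by (simp add: inner_vec_def)
  also have "\<dots> = u \<bullet> (C *v (A *v (v v* C)))"
    by (simp add: dot_lmul_matrix)
  also have "v v* C = C *v v"
    using symC by (metis transpose_matrix_vector)
  also have "C *v (A *v (C *v v)) = (C ** A ** C) *v v"
    by (simp add: matrix_vector_mul_assoc matrix_mul_assoc)
  finally show ?thesis .
qed

lemma sym_form:
  fixes M :: "real^'n::finite^'n"
  assumes "transpose M = M"
  shows "v \<bullet> (M *v u) = u \<bullet> (M *v v)"
proof -
  have "v \<bullet> (M *v u) = (v v* M) \<bullet> u" by (simp add: dot_lmul_matrix)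
  also have "v v* M = M *v v" using assms by (metis transpose_matrix_vector)
  finally show ?thesis by (simp add: inner_commute)
qed



lemma Econst: "integrable std_gaussian (\<lambda>z::real^'n::finite. c::real)"
  "integral\<^sup>L std_gaussian (\<lambda>z::real^'n::finite. c::real) = c"
proof -
  have i1: "integrable std_gaussian (\<lambda>z::real^'n. 1::real)" by (rule E0(1))
  have i2: "integral\<^sup>L std_gaussian (\<lambda>z::real^'n. 1::real) = 1" by (rule E0(2))
  show "integrable std_gaussian (\<lambda>z::real^'n::finite. c::real)"
    using integrable_mult_right[OF i1, of c] by simp
  show "integral\<^sup>L std_gaussian (\<lambda>z::real^'n::finite. c::real) = c"
    using integral_mult_right_zero[of std_gaussian c "\<lambda>z::real^'n. 1::real"] i2 by simp
qed

lemma msp[simp]: "Sigma_Algebra.measure (std_gaussian :: (real^'n::finite) measure) (space std_gaussian) = 1"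
proof -
  have i2: "integral\<^sup>L std_gaussian (\<lambda>z::real^'n. 1::real) = 1" by (rule E0(2))
  then show ?thesis by simp
qed

context
  fixes S C A :: "real^'n::finite^'n" and F0 :: real and g0 :: "real^'n"
  assumes SC: "S ** transpose S = C" and symC: "transpose C = C" and symA: "transpose A = A"
begin

abbreviation "Qf z \<equiv> (\<Sum>k\<in>UNIV. (axis k 1 \<bullet> (S *v z)) * (A $ k \<bullet> (S *v z)))"
abbreviation "TT \<equiv> (\<Sum>k\<in>UNIV. axis k 1 \<bullet> (C *v A $ k))"

lemma EF0: "integrable std_gaussian (\<lambda>z. F0 + g0 \<bullet> (S *v z) + Qf z)"
  "integral\<^sup>L std_gaussian (\<lambda>z. F0 + g0 \<bullet> (S *v z) + Qf z) = F0 + TT"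
proof -
  note I = Econst N1[OF SC] Q0[OF SC]
  show "integrable std_gaussian (\<lambda>z. F0 + g0 \<bullet> (S *v z) + Qf z)"
    by (intro Bochner_Integration.integrable_add I)
  show "integral\<^sup>L std_gaussian (\<lambda>z. F0 + g0 \<bullet> (S *v z) + Qf z) = F0 + TT"
    by (simp add: Bochner_Integration.integral_add Bochner_Integration.integrable_add I del: integral_sum' integrable_sum)
qed

lemma EF1: "integrable std_gaussian (\<lambda>z. (u \<bullet> (S *v z)) * (F0 + g0 \<bullet> (S *v z) + Qf z))"
  "integral\<^sup>L std_gaussian (\<lambda>z. (u \<bullet> (S *v z)) * (F0 + g0 \<bullet> (S *v z) + Qf z)) = u \<bullet> (C *v g0)"
proof -
  note I = Econst N1[OF SC] N2[OF SC] Q1[OF SC]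
  have e: "(\<lambda>z. (u \<bullet> (S *v z)) * (F0 + g0 \<bullet> (S *v z) + Qf z)) =
     (\<lambda>z. (u \<bullet> (S *v z)) * F0 + (u \<bullet> (S *v z)) * (g0 \<bullet> (S *v z)) + (u \<bullet> (S *v z)) * Qf z)"
    by (simp add: distrib_left)
  show "integrable std_gaussian (\<lambda>z. (u \<bullet> (S *v z)) * (F0 + g0 \<bullet> (S *v z) + Qf z))"
    unfolding e by (intro Bochner_Integration.integrable_add integrable_mult_left I)
  show "integral\<^sup>L std_gaussian (\<lambda>z. (u \<bullet> (S *v z)) * (F0 + g0 \<bullet> (S *v z) + Qf z)) = u \<bullet> (C *v g0)"
    unfolding e by (simp add: Bochner_Integration.integral_add Bochner_Integration.integrable_add I del: integral_sum' integrable_sum)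
qed

lemma EF2: "integrable std_gaussian (\<lambda>z. (u \<bullet> (S *v z)) * (v \<bullet> (S *v z)) * (F0 + g0 \<bullet> (S *v z) + Qf z))"
  "integral\<^sup>L std_gaussian (\<lambda>z. (u \<bullet> (S *v z)) * (v \<bullet> (S *v z)) * (F0 + g0 \<bullet> (S *v z) + Qf z))
    = (u \<bullet> (C *v v)) * (F0 + TT) + 2 * (u \<bullet> ((C ** A ** C) *v v))"
proof -
  note I = Econst N2[OF SC] N3[OF SC] Q2[OF SC]
  have e: "(\<lambda>z. (u \<bullet> (S *v z)) * (v \<bullet> (S *v z)) * (F0 + g0 \<bullet> (S *v z) + Qf z)) =
     (\<lambda>z. (u \<bullet> (S *v z)) * (v \<bullet> (S *v z)) * F0 + (u \<bullet> (S *v z)) * (v \<bullet> (S *v z)) * (g0 \<bullet> (S *v z))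
       + (u \<bullet> (S *v z)) * (v \<bullet> (S *v z)) * Qf z)"
    by (simp add: distrib_left)
  have symCAC: "transpose (C ** A ** C) = C ** A ** C"
    using symC symA by (simp add: matrix_transpose_mul matrix_mul_assoc)
  have R2: "(\<Sum>k\<in>UNIV. (u \<bullet> (C *v A $ k)) * (v \<bullet> (C *v axis k 1))) = u \<bullet> ((C ** A ** C) *v v)"
    using R_id[OF symC, where u=v and v=u and A=A] sym_form[OF symCAC, of u v] by (simp add: mult.commute)
  show "integrable std_gaussian (\<lambda>z. (u \<bullet> (S *v z)) * (v \<bullet> (S *v z)) * (F0 + g0 \<bullet> (S *v z) + Qf z))"
    unfolding e by (intro Bochner_Integration.integrable_add integrable_mult_left I)
  show "integral\<^sup>L std_gaussian (\<lambda>z. (u \<bullet> (S *v z)) * (v \<bullet> (S *v z)) * (F0 + g0 \<bullet> (S *v z) + Qf z))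
    = (u \<bullet> (C *v v)) * (F0 + TT) + 2 * (u \<bullet> ((C ** A ** C) *v v))"
    unfolding e
    apply (simp only: Bochner_Integration.integral_add Bochner_Integration.integrable_add I integrable_mult_left integral_mult_left_zero)
    apply (simp add: R_id[OF symC] R2 algebra_simps)
    done
qed

end



lemma mv_axis: "((M::real^'n::finite^'m) *v axis j 1) $ i = M $ i $ j"
  by (simp add: matrix_vector_mult_def axis_def delta_mult)

lemma quad_Q: "y \<bullet> ((A::real^'n::finite^'n) *v y) = (\<Sum>k\<in>UNIV. (axis k 1 \<bullet> y) * (A $ k \<bullet> y))"
proof -
  have a: "axis k 1 \<bullet> y = y $ k" for k by (simp add: inner_axis')
  have b: "A $ k \<bullet> y = (A *v y) $ k" for k by (simp add: matrix_vector_mult_def inner_vec_def)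
  show ?thesis unfolding a b by (simp add: inner_vec_def)
qed

lemma main_with_S:
  fixes A S C :: "real^'n::finite^'n" and b m :: "real^'n" and c :: real and f :: "real^'n \<Rightarrow> real"
  assumes SC: "S ** transpose S = C" and symC: "transpose C = C" and symA: "transpose A = A"
    and fdef: "\<And>x. f x = x \<bullet> (A *v x) + b \<bullet> x + c"
    and G: "gaussian m C = distr std_gaussian borel (\<lambda>z. m + S *v z)"
  shows "agrf_m_rhs f m C = - (2 *\<^sub>R (C *v (A *v m))) - C *v b
       \<and> agrf_C_rhs f m C = - (2 *\<^sub>R (C ** A ** C))"
proof -
  define F0 where "F0 = f m"
  define g0 where "g0 = 2 *\<^sub>R (A *v m) + b"
  define TT where "TT = (\<Sum>k\<in>UNIV. axis k 1 \<bullet> (C *v A $ k))"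
  have fE: "f = (\<lambda>x. x \<bullet> (A *v x) + b \<bullet> x + c)" by (rule ext) (simp add: fdef)
  have meas: "(\<lambda>z. m + S *v z) \<in> measurable std_gaussian borel"
    unfolding std_gaussian_def by (simp add: borel_measurable_continuous_onI continuous_intros)
  have gexp_eq: "gexp m C g = integral\<^sup>L std_gaussian (\<lambda>z. g (m + S *v z))"
    if "g \<in> borel_measurable borel" for g
    unfolding gexp_def G by (rule integral_distr[OF meas that])
  have mf: "f \<in> borel_measurable borel"
    unfolding fE by (simp add: borel_measurable_continuous_onI continuous_intros)
  have mf1: "(\<lambda>x. x $ i * f x) \<in> borel_measurable borel" for i
    unfolding fE by (simp add: borel_measurable_continuous_onI continuous_intros)
  have mf2: "(\<lambda>x. x $ i * x $ j * f x) \<in> borel_measurable borel" for i j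
    unfolding fE by (simp add: borel_measurable_continuous_onI continuous_intros)
  have hf: "f (m + S *v z) = F0 + g0 \<bullet> (S *v z) + (\<Sum>k\<in>UNIV. (axis k 1 \<bullet> (S *v z)) * (A $ k \<bullet> (S *v z)))" for z
  proof -
    define y where "y = S *v z"
    have "m \<bullet> (A *v y) = y \<bullet> (A *v m)" by (rule sym_form[OF symA])
    then have "f (m + y) = F0 + g0 \<bullet> y + y \<bullet> (A *v y)"
      unfolding F0_def g0_def fdef
      by (simp add: matrix_vector_right_distrib inner_add_left inner_add_right inner_commute algebra_simps)
    then show ?thesis unfolding y_def quad_Q .
  qed
  have coord: "(m + S *v z) $ i = m $ i + axis i 1 \<bullet> (S *v z)" for z i
    by (simp add: inner_axis')
  note EF0' = EF0[OF SC symC symA, of F0 g0, folded TT_def]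
  note EF1' = EF1[OF SC symC symA, of _ F0 g0]
  note EF2' = EF2[OF SC symC symA, of _ _ F0 g0, folded TT_def]
  have h0: "gexp m C f = F0 + TT"
    by (simp only: gexp_eq[OF mf] hf EF0')
  have h1: "gexp m C (\<lambda>x. x $ i * f x) = m $ i * (F0 + TT) + axis i 1 \<bullet> (C *v g0)" for i
  proof -
    have "gexp m C (\<lambda>x. x $ i * f x) = integral\<^sup>L std_gaussian (\<lambda>z.
        m $ i * (F0 + g0 \<bullet> (S *v z) + (\<Sum>k\<in>UNIV. (axis k 1 \<bullet> (S *v z)) * (A $ k \<bullet> (S *v z))))
       + (axis i 1 \<bullet> (S *v z)) * (F0 + g0 \<bullet> (S *v z) + (\<Sum>k\<in>UNIV. (axis k 1 \<bullet> (S *v z)) * (A $ k \<bullet> (S *v z)))))"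
      by (simp only: gexp_eq[OF mf1] hf coord distrib_right)
    also have "\<dots> = m $ i * (F0 + TT) + axis i 1 \<bullet> (C *v g0)"
      by (simp only: Bochner_Integration.integral_add integrable_mult_right EF0' EF1' integral_mult_right_zero)
    finally show ?thesis .
  qed
  have h2: "gexp m C (\<lambda>x. x $ i * x $ j * f x) = m $ i * m $ j * (F0 + TT) + m $ i * (axis j 1 \<bullet> (C *v g0))
     + m $ j * (axis i 1 \<bullet> (C *v g0)) + ((axis i 1 \<bullet> (C *v axis j 1)) * (F0 + TT) + 2 * (axis i 1 \<bullet> ((C ** A ** C) *v axis j 1)))" for i j
  proof -
    have "gexp m C (\<lambda>x. x $ i * x $ j * f x) = integral\<^sup>L std_gaussian (\<lambda>z.
        (m $ i * m $ j) * (F0 + g0 \<bullet> (S *v z) + (\<Sum>k\<in>UNIV. (axis k 1 \<bullet> (S *v z)) * (A $ k \<bullet> (S *v z))))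
       + m $ i * ((axis j 1 \<bullet> (S *v z)) * (F0 + g0 \<bullet> (S *v z) + (\<Sum>k\<in>UNIV. (axis k 1 \<bullet> (S *v z)) * (A $ k \<bullet> (S *v z)))))
       + m $ j * ((axis i 1 \<bullet> (S *v z)) * (F0 + g0 \<bullet> (S *v z) + (\<Sum>k\<in>UNIV. (axis k 1 \<bullet> (S *v z)) * (A $ k \<bullet> (S *v z)))))
       + (axis i 1 \<bullet> (S *v z)) * (axis j 1 \<bullet> (S *v z)) * (F0 + g0 \<bullet> (S *v z) + (\<Sum>k\<in>UNIV. (axis k 1 \<bullet> (S *v z)) * (A $ k \<bullet> (S *v z)))))"
      unfolding gexp_eq[OF mf2] hf coord by (simp only: algebra_simps)
    also have "\<dots> = m $ i * m $ j * (F0 + TT) + m $ i * (axis j 1 \<bullet> (C *v g0))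
     + m $ j * (axis i 1 \<bullet> (C *v g0)) + ((axis i 1 \<bullet> (C *v axis j 1)) * (F0 + TT) + 2 * (axis i 1 \<bullet> ((C ** A ** C) *v axis j 1)))"
      by (simp only: Bochner_Integration.integral_add Bochner_Integration.integrable_add integrable_mult_right EF0' EF1' EF2' integral_mult_right_zero)
    finally show ?thesis .
  qed
  show ?thesis
  proof
    show "agrf_m_rhs f m C = - (2 *\<^sub>R (C *v (A *v m))) - C *v b"
      unfolding agrf_m_rhs_def vec_eq_iff
      apply (simp only: h0 h1 vec_lambda_beta)
      by (simp add: h0 h1 g0_def inner_axis' matrix_vector_right_distrib algebra_simps)
    show "agrf_C_rhs f m C = - (2 *\<^sub>R (C ** A ** C))"
      unfolding agrf_C_rhs_def vec_eq_iff
      apply (simp only: h0 h1 h2 vec_lambda_beta)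
      by (simp add: h0 h1 h2 inner_axis' mv_axis algebra_simps)
  qed
qed



lemma sym_form2:
  fixes M :: "real^'n::finite^'n"
  assumes "transpose M = M"
  shows "v \<bullet> (M *v u) = u \<bullet> (M *v v)"
proof -
  have "v \<bullet> (M *v u) = (v v* M) \<bullet> u" by (simp add: dot_lmul_matrix)
  also have "v v* M = M *v v" using assms by (metis transpose_matrix_vector)
  finally show ?thesis by (simp add: inner_commute)
qed

lemma psd_zero:
  fixes C :: "real^'n::finite^'n"
  assumes psd: "psd C" and w0: "w \<bullet> (C *v w) = 0"
  shows "C *v w = 0"
proof (rule ccontr)
  assume ne: "C *v w \<noteq> 0"
  define v where "v = C *v w"
  have symC: "transpose C = C" and pos: "\<And>x. 0 \<le> x \<bullet> (C *v x)" using psd by (auto simp: psd_def)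
  define a where "a = v \<bullet> v"
  define K where "K = v \<bullet> (C *v v)"
  have a0: "a > 0" using ne by (simp add: a_def v_def)
  have K0: "K \<ge> 0" using pos by (simp add: K_def)
  have wv: "w \<bullet> (C *v v) = a"
    using sym_form2[OF symC, of w v] by (simp add: a_def v_def)
  have expand: "(w - t *\<^sub>R v) \<bullet> (C *v (w - t *\<^sub>R v)) = - 2 * t * a + t * t * K" for t
    using w0 wv
    by (simp add: matrix_vector_mult_diff_distrib matrix_vector_mult_scaleR inner_diff_left inner_diff_right
        K_def a_def v_def algebra_simps)
  define t where "t = a / (K + 1)"
  have t0: "t > 0" using a0 K0 by (simp add: t_def)
  have tK: "t * K < a" using a0 K0 by (simp add: t_def field_simps)
  have "- 2 * t * a + t * t * K = t * (t * K - 2 * a)" by (simp add: algebra_simps)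
  also have "\<dots> < 0" using t0 tK a0 by (simp add: mult_pos_neg)
  finally have "(w - t *\<^sub>R v) \<bullet> (C *v (w - t *\<^sub>R v)) < 0" using expand by simp
  with pos show False by (meson not_le)
qed

lemma delta_mult6: "(x::real) * (if P then 1 else 0) = (if P then x else 0)" by simp

lemma mv_axis6: "((M::real^'n::finite^'m) *v axis j 1) $ i = M $ i $ j"
  by (simp add: matrix_vector_mult_def axis_def delta_mult6)

lemma gram_step:
  fixes C :: "real^'n::finite^'n" and r :: "'n \<Rightarrow> real^'n"
  assumes psd: "psd C" and i0: "i0 \<notin> I"
    and G: "\<And>i j. i \<in> I \<Longrightarrow> j \<in> I \<Longrightarrow> r i \<bullet> r j = C $ i $ j"
  shows "\<exists>r'::'n \<Rightarrow> real^'n. \<forall>i\<in>insert i0 I. \<forall>j\<in>insert i0 I. r' i \<bullet> r' j = C $ i $ j"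
proof -
  have symC: "transpose C = C" and pos: "\<And>x. 0 \<le> x \<bullet> (C *v x)" using psd by (auto simp: psd_def)
  have Csym: "C $ i $ j = C $ j $ i" for i j
    using symC by (metis transpose_def vec_lambda_beta)
  define msk :: "real^'n \<Rightarrow> real^'n" where "msk a = (\<chi> k. if k \<in> I then a $ k else 0)" for a
  define R where "R a = (\<Sum>j\<in>UNIV. (msk a) $ j *\<^sub>R r j)" for a
  have linR: "linear R"
  proof (rule linearI)
    show "R (x + y) = R x + R y" for x y
      unfolding R_def sum.distrib[symmetric] by (intro sum.cong) (auto simp: msk_def scaleR_add_left)
    show "R (k *\<^sub>R x) = k *\<^sub>R R x" for k x
      unfolding R_def scaleR_sum_right by (intro sum.cong) (auto simp: msk_def)
  qed
  have gramR: "R a \<bullet> R b = msk a \<bullet> (C *v msk b)" for a b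
  proof -
    have "R a \<bullet> R b = (\<Sum>j\<in>UNIV. \<Sum>n\<in>UNIV. (msk b) $ j * ((msk a) $ n * (r n \<bullet> r j)))"
      by (simp add: R_def inner_sum_left inner_sum_right sum_distrib_left)
    also have "\<dots> = (\<Sum>j\<in>UNIV. \<Sum>n\<in>UNIV. (msk b) $ j * ((msk a) $ n * C $ n $ j))"
      by (intro sum.cong refl) (auto simp: msk_def G)
    also have "\<dots> = (\<Sum>n\<in>UNIV. \<Sum>j\<in>UNIV. (msk a) $ n * (C $ n $ j * (msk b) $ j))"
      by (subst sum.swap) (simp add: mult_ac)
    also have "\<dots> = msk a \<bullet> (C *v msk b)"
      by (simp add: inner_vec_def matrix_vector_mult_def sum_distrib_left)
    finally show ?thesis .
  qed
  have Rax: "R (axis j 1) = r j" if "j \<in> I" for j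
  proof -
    have "R (axis j 1) = (\<Sum>k\<in>UNIV. (if k = j then r j else 0))"
      unfolding R_def by (intro sum.cong refl) (auto simp: msk_def axis_def that)
    then show ?thesis by simp
  qed
  define c :: "real^'n" where "c = (\<chi> k. if k \<in> I then C $ i0 $ k else 0)"
  have cperp: "c \<bullet> a = 0" if "R a = 0" for a
  proof -
    have "msk a \<bullet> (C *v msk a) = 0" using gramR[of a a] that by simp
    then have "C *v msk a = 0" by (rule psd_zero[OF psd])
    then have "(C *v msk a) $ i0 = 0" by simp
    moreover have "(C *v msk a) $ i0 = c \<bullet> a"
      by (auto simp: matrix_vector_mult_def inner_vec_def c_def msk_def intro!: sum.cong)
    ultimately show ?thesis by simp
  qed
  have "c \<in> (R -` {0})\<^sup>\<bottom>"
    using cperp by (auto simp: orthogonal_comp_def orthogonal_def inner_commute)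
  also have "R -` {0} = (range (adjoint R))\<^sup>\<bottom>"
    by (rule ker_orthogonal_comp_adjoint[OF linR])
  also have "(range (adjoint R))\<^sup>\<bottom>\<^sup>\<bottom> = range (adjoint R)"
    by (rule orthogonal_comp_self) (simp add: adjoint_linear[OF linR] linear_subspace_image)
  finally obtain u where u: "c = adjoint R u" by auto
  have uR: "u \<bullet> r j = C $ i0 $ j" if "j \<in> I" for j
  proof -
    have "u \<bullet> r j = r j \<bullet> u" by (rule inner_commute)
    also have "\<dots> = R (axis j 1) \<bullet> u" using Rax[OF that] by simp
    also have "\<dots> = axis j 1 \<bullet> adjoint R u" by (simp add: adjoint_works[OF linR])
    also have "\<dots> = C $ i0 $ j" using that by (simp add: u[symmetric] c_def inner_axis')
    finally show ?thesis .
  qed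
  obtain p q where p: "p \<in> span (r ` I)" and q: "\<And>w. w \<in> span (r ` I) \<Longrightarrow> orthogonal q w"
    and upq: "u = p + q"
    using orthogonal_subspace_decomp_exists[of "r ` I" u] by blast
  have pR: "p \<bullet> r j = C $ i0 $ j" if "j \<in> I" for j
  proof -
    have "q \<bullet> r j = 0" using q[of "r j"] that by (auto simp: orthogonal_def span_base)
    then show ?thesis using uR[OF that] upq by (simp add: inner_add_left)
  qed
  have "span (r ` I) \<subseteq> range R"
  proof (rule span_minimal)
    show "r ` I \<subseteq> range R"
    proof
      fix x assume "x \<in> r ` I"
      then obtain j where j: "j \<in> I" "x = r j" by auto
      then have "x = R (axis j 1)" using Rax by simp
      then show "x \<in> range R" by auto
    qed
    show "subspace (range R)" by (simp add: linR linear_subspace_image)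
  qed
  with p obtain a where pa: "p = R a" by auto
  have pp: "p \<bullet> p = msk a \<bullet> (C *v msk a)" using gramR[of a a] pa by simp
  have cross: "axis i0 1 \<bullet> (C *v msk a) = p \<bullet> p"
  proof -
    have "axis i0 1 \<bullet> (C *v msk a) = (\<Sum>j\<in>UNIV. (msk a) $ j * C $ i0 $ j)"
      by (simp add: inner_axis' matrix_vector_mult_def mult.commute)
    also have "\<dots> = (\<Sum>j\<in>UNIV. (msk a) $ j * (p \<bullet> r j))"
      by (intro sum.cong refl) (auto simp: msk_def pR)
    also have "\<dots> = p \<bullet> R a"
      by (simp add: R_def inner_sum_right)
    finally show ?thesis using pa by simp
  qed
  have Cii: "axis i0 1 \<bullet> (C *v axis i0 1) = C $ i0 $ i0"
    by (simp add: inner_axis' mv_axis6)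
  have "0 \<le> (axis i0 1 - msk a) \<bullet> (C *v (axis i0 1 - msk a))" by (rule pos)
  also have "\<dots> = C $ i0 $ i0 - p \<bullet> p"
    using Cii cross pp sym_form2[OF symC, of "msk a" "axis i0 1"]
    by (simp add: matrix_vector_mult_diff_distrib inner_diff_left inner_diff_right)
  finally have dpos: "0 \<le> C $ i0 $ i0 - p \<bullet> p" .
  have "dim (r ` I) \<le> card (r ` I)"
    by (rule dim_le_card) (auto intro: span_base)
  also have "\<dots> \<le> card I" by (rule card_image_le) simp
  also have "\<dots> < card (UNIV :: 'n set)"
    using i0 by (intro psubset_card_mono) auto
  finally have dimlt: "dim (r ` I) < DIM(real^'n)" by simp
  obtain z where z0: "z \<noteq> 0" and zperp: "\<And>y. y \<in> span (r ` I) \<Longrightarrow> orthogonal z y"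
    using orthogonal_to_subspace_exists[OF dimlt] by metis
  have zr: "z \<bullet> r j = 0" if "j \<in> I" for j
    using zperp[of "r j"] that by (auto simp: orthogonal_def span_base)
  have zp: "z \<bullet> p = 0" using zperp[OF p] by (simp add: orthogonal_def)
  define t where "t = sqrt (C $ i0 $ i0 - p \<bullet> p) / norm z"
  have tt: "t * t * (z \<bullet> z) = C $ i0 $ i0 - p \<bullet> p"
  proof -
    define d where "d = C $ i0 $ i0 - p \<bullet> p"
    have zz: "z \<bullet> z = norm z * norm z" by (simp add: power2_norm_eq_inner[symmetric] power2_eq_square)
    have nz: "norm z \<noteq> 0" using z0 by simp
    have sd: "sqrt d * sqrt d = d" using dpos d_def by simp
    have "t * t * (z \<bullet> z) = (sqrt d * sqrt d) * (norm z * norm z) / (norm z * norm z)"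
      unfolding t_def d_def[symmetric] zz by (simp add: field_simps)
    also have "\<dots> = d" using nz sd by simp
    finally show ?thesis by (simp add: d_def)
  qed
  define r' where "r' = r(i0 := p + t *\<^sub>R z)"
  have new: "r' i0 \<bullet> r' i0 = C $ i0 $ i0"
    using tt zp by (simp add: r'_def inner_add_left inner_add_right inner_commute algebra_simps)
  have new2: "r' i0 \<bullet> r' j = C $ i0 $ j" if "j \<in> I" for j
    using that i0 pR zr by (auto simp: r'_def inner_add_left)
  have new3: "r' j \<bullet> r' i0 = C $ j $ i0" if "j \<in> I" for j
    using new2[OF that] by (simp add: inner_commute Csym)
  have old: "r' i \<bullet> r' j = C $ i $ j" if "i \<in> I" "j \<in> I" for i j
    using that i0 G by (auto simp: r'_def)
  show ?thesis
    using new new2 new3 old by (intro exI[of _ r']) auto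
qed

lemma gram_exists:
  fixes C :: "real^'n::finite^'n"
  assumes psd: "psd C"
  shows "\<exists>S::real^'n^'n. S ** transpose S = C"
proof -
  have "finite I \<Longrightarrow> \<exists>r::'n \<Rightarrow> real^'n. \<forall>i\<in>I. \<forall>j\<in>I. r i \<bullet> r j = C $ i $ j" for I
  proof (induction I rule: finite_induct)
    case empty then show ?case by auto
  next
    case (insert i0 I)
    then obtain r :: "'n \<Rightarrow> real^'n" where r: "\<forall>i\<in>I. \<forall>j\<in>I. r i \<bullet> r j = C $ i $ j" by blast
    show ?case by (rule gram_step[OF psd insert(2), of r]) (use r in auto)
  qed
  from this[of UNIV] obtain r :: "'n \<Rightarrow> real^'n" where r: "\<And>i j. r i \<bullet> r j = C $ i $ j" by auto
  define S :: "real^'n^'n" where "S = (\<chi> i. r i)"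
  have "S ** transpose S = C"
    unfolding vec_eq_iff
    by (simp add: S_def matrix_matrix_mult_def transpose_def r[symmetric] inner_vec_def)
  then show ?thesis by blast
qed


theorem theorem2:
  fixes A :: "real^'n^'n" and b :: "real^'n" and c :: real
    and f :: "real^'n \<Rightarrow> real" and m :: "real^'n" and C :: "real^'n^'n"
  assumes "transpose A = A"
    and "\<And>x. f x = x \<bullet> (A *v x) + b \<bullet> x + c"
    and "psd C"
  shows "agrf_m_rhs f m C = - (2 *\<^sub>R (C *v (A *v m))) - C *v b
       \<and> agrf_C_rhs f m C = - (2 *\<^sub>R (C ** A ** C))"
proof -
  have symC: "transpose C = C" using assms(3) by (simp add: psd_def)
  define S where "S = (SOME S :: real^'n^'n. S ** transpose S = C)"
  have SC: "S ** transpose S = C"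
    using gram_exists[OF assms(3)] unfolding S_def by (rule someI_ex)
  have G: "gaussian m C = distr std_gaussian borel (\<lambda>z. m + S *v z)"
    by (simp add: gaussian_def S_def)
  show ?thesis by (rule main_with_S[OF SC symC assms(1) assms(2) G])
qed

end
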